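(* Let $X,Y$ be separable metrizable spaces and let $f_n, f\colon X\to Y$ be continuous maps such that $f_n\to f$ uniformly on compact subsets of $X$. If $u_n\to u$ in $\mathcal{M}(X)$, then $\mathcal{M}(f_n)(u_n)\to\mathcal{M}(f)(u)$ in $\mathcal{M}(Y)$. In particular $\mathcal{M}(f_n)\to\mathcal{M}(f)$ uniformly on compact subsets of $\mathcal{M}(X)$.
   Context: For a separable metrizable space $X$, $\mathcal{M}(X)$ is the space of equivalence classes (modulo equality Lebesgue-a.e. on $[0,1]$) of Lebesgue measurable functions $[0,1]\to X$, topologized by convergence in measure, i.e. by the metric $(u,w)\mapsto\int_0^1 d(u(t),w(t))\,dt$ for any compatible bounded metric $d$ on $X$. For continuous $f\colon X\to Y$, $\mathcal{M}(f)(u)=f\circ u$. *)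

theory Defs
  imports "HOL-Analysis.Analysis"
begin

text \<open>Representatives of elements of M(X): Lebesgue measurable maps [0,1] -> X
  (values outside [0,1] are irrelevant).  X is a separable metrizable space,
  modelled as a type of class metric_space + second_countable_topology.\<close>

definition Mset :: "(real \<Rightarrow> 'a::{metric_space,second_countable_topology}) set" where
  "Mset = lebesgue_on {0..1} \<rightarrow>\<^sub>M borel"

text \<open>The metric of convergence in measure, using the bounded compatible metric min d 1.\<close>
definition dM :: "(real \<Rightarrow> 'a::{metric_space,second_countable_topology}) \<Rightarrow> (real \<Rightarrow> 'a) \<Rightarrow> real" where
  "dM u w = integral\<^sup>L (lebesgue_on {0..1}) (\<lambda>t. min (dist (u t) (w t)) 1)"

definition M_topology :: "(real \<Rightarrow> 'a::{metric_space,second_countable_topology}) topology" where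
  "M_topology = topology (\<lambda>S. S \<subseteq> Mset \<and> (\<forall>u\<in>S. \<exists>e>0. \<forall>w\<in>Mset. dM u w < e \<longrightarrow> w \<in> S))"

definition Mmap :: "('a \<Rightarrow> 'b) \<Rightarrow> (real \<Rightarrow> 'a) \<Rightarrow> (real \<Rightarrow> 'b)" where
  "Mmap f u = f \<circ> u"

end

theory Submission
  imports Defs
begin

lemma fm01: "finite_measure (lebesgue_on {0..1::real})"
  by (rule finite_measure_lebesgue_on) auto

lemma Mset_meas: "u \<in> Mset \<Longrightarrow> u \<in> borel_measurable (lebesgue_on {0..1})"
  by (simp add: Mset_def)

lemma dist_meas:
  assumes "u \<in> Mset" "w \<in> Mset"
  shows "(\<lambda>t. min (dist (u t) (w t)) 1) \<in> borel_measurable (lebesgue_on {0..1})"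
  using assms unfolding Mset_def by measurable

lemma dist_int:
  assumes "u \<in> Mset" "w \<in> Mset"
  shows "integrable (lebesgue_on {0..1}) (\<lambda>t. min (dist (u t) (w t)) 1)"
  by (rule finite_measure.integrable_const_bound[OF fm01, where B=1]) (auto simp: dist_meas assms)

lemma Mmap_Mset:
  assumes "continuous_on UNIV g" "u \<in> Mset"
  shows "Mmap g u \<in> Mset"
  using assms unfolding Mset_def Mmap_def
  by (metis borel_measurable_continuous_onI measurable_comp)

lemma dM_nonneg: "dM u w \<ge> 0"
  unfolding dM_def by (rule integral_nonneg_AE) auto

lemma dM_sym: "dM u w = dM w u"
  unfolding dM_def by (simp add: dist_commute)

lemma dM_refl: "dM u u = 0"
  unfolding dM_def by simp

lemma dM_triangle:
  assumes "u \<in> Mset" "v \<in> Mset" "w \<in> Mset"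
  shows "dM u w \<le> dM u v + dM v w"
proof -
  have "dM u v + dM v w = integral\<^sup>L (lebesgue_on {0..1}) (\<lambda>t. min (dist (u t) (v t)) 1 + min (dist (v t) (w t)) 1)"
    unfolding dM_def using Bochner_Integration.integral_add[OF dist_int[OF assms(1,2)] dist_int[OF assms(2,3)]] by simp
  moreover have "dM u w \<le> integral\<^sup>L (lebesgue_on {0..1}) (\<lambda>t. min (dist (u t) (v t)) 1 + min (dist (v t) (w t)) 1)"
    unfolding dM_def
  proof (rule integral_mono)
    fix t
    show "min (dist (u t) (w t)) 1 \<le> min (dist (u t) (v t)) 1 + min (dist (v t) (w t)) 1"
      using dist_triangle[of "u t" "w t" "v t"] zero_le_dist[of "u t" "v t"] zero_le_dist[of "v t" "w t"] unfolding min_def by argo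
  qed (auto intro!: integrable_add dist_int assms)
  ultimately show ?thesis by simp
qed

lemma subseq_crit:
  fixes a :: "nat \<Rightarrow> real"
  assumes "\<And>r::nat\<Rightarrow>nat. strict_mono r \<Longrightarrow> \<exists>s::nat\<Rightarrow>nat. strict_mono s \<and> (\<lambda>k. a (r (s k))) \<longlonglongrightarrow> 0"
  shows "a \<longlonglongrightarrow> 0"
proof (rule ccontr)
  assume "\<not> a \<longlonglongrightarrow> 0"
  then have "\<not> (\<forall>e>0. eventually (\<lambda>n. dist (a n) 0 < e) sequentially)"
    unfolding tendsto_iff[of a 0 sequentially] .
  then obtain e where e: "e > 0" "\<not> eventually (\<lambda>n. dist (a n) 0 < e) sequentially"
    by blast
  define S where "S = {n. dist (a n) 0 \<ge> e}"
  have "infinite S"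
  proof
    assume "finite S"
    then obtain N where N: "\<forall>n\<in>S. n < N" using finite_nat_set_iff_bounded by auto
    have "eventually (\<lambda>n. dist (a n) 0 < e) sequentially"
      unfolding eventually_sequentially
    proof (intro exI allI impI)
      fix n assume "N \<le> n"
      then have "n \<notin> S" using N by fastforce
      then show "dist (a n) 0 < e" unfolding S_def by simp
    qed
    with e show False by simp
  qed
  then obtain r :: "nat \<Rightarrow> nat" where r: "strict_mono r" "\<forall>n. r n \<in> S" using infinite_enumerate[of S] by blast
  from assms[OF r(1)] obtain s where s: "strict_mono s" "(\<lambda>k. a (r (s k))) \<longlonglongrightarrow> 0" by blast
  have "eventually (\<lambda>k. dist (a (r (s k))) 0 < e) sequentially" using tendstoD[OF s(2) e(1)] .
  then obtain k where k: "dist (a (r (s k))) 0 < e" unfolding eventually_sequentially by blast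
  have "r (s k) \<in> S" using r(2) by blast
  with k show False unfolding S_def by simp
qed

lemma part1:
  fixes fs :: "nat \<Rightarrow> 'a::{metric_space,second_countable_topology} \<Rightarrow> 'b::{metric_space,second_countable_topology}"
    and f :: "'a \<Rightarrow> 'b"
  assumes cont_fs: "\<And>n. continuous_on UNIV (fs n)"
    and cont_f: "continuous_on UNIV f"
    and unif: "\<And>K. compact K \<Longrightarrow> uniform_limit K fs f sequentially"
    and us: "\<And>n. us n \<in> Mset" and u: "u \<in> Mset" and lim: "(\<lambda>n. dM (us n) u) \<longlonglongrightarrow> 0"
  shows "(\<lambda>n. dM (Mmap (fs n) (us n)) (Mmap f u)) \<longlonglongrightarrow> 0"
proof (rule subseq_crit)
  fix r :: "nat \<Rightarrow> nat" assume r: "strict_mono r"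
  define g where "g k t = min (dist (us (r k) t) (u t)) 1" for k t
  have gi: "\<And>k. integrable (lebesgue_on {0..1}) (g k)"
    unfolding g_def using dist_int us u by blast
  have "(\<lambda>k. \<integral>t. norm (g k t) \<partial>lebesgue_on {0..1}) = (\<lambda>k. dM (us (r k)) u)"
    by (simp add: g_def dM_def)
  moreover have "(\<lambda>k. dM (us (r k)) u) \<longlonglongrightarrow> 0"
    using LIMSEQ_subseq_LIMSEQ[OF lim r] by (simp add: o_def)
  ultimately have "(\<lambda>k. \<integral>t. norm (g k t) \<partial>lebesgue_on {0..1}) \<longlonglongrightarrow> 0" by simp
  from tendsto_L1_AE_subseq[OF gi this] obtain s where
    s: "strict_mono s" "AE t in lebesgue_on {0..1}. (\<lambda>k. g (s k) t) \<longlonglongrightarrow> 0" by blast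
  define m where "m = r \<circ> s"
  have m: "strict_mono m" unfolding m_def using r s(1) by (simp add: strict_mono_o)
  have ae: "AE t in lebesgue_on {0..1}.
      (\<lambda>k. min (dist (Mmap (fs (m k)) (us (m k)) t) (Mmap f u t)) 1) \<longlonglongrightarrow> 0"
    using s(2)
  proof eventually_elim
    case (elim t)
    have c1: "(\<lambda>k. us (m k) t) \<longlonglongrightarrow> u t"
    proof (rule tendstoI)
      fix e :: real assume "e > 0"
      then have "eventually (\<lambda>k. dist (g (s k) t) 0 < min e 1) sequentially"
        using tendstoD[OF elim, of "min e 1"] by simp
      then show "eventually (\<lambda>k. dist (us (m k) t) (u t) < e) sequentially"
      proof (rule eventually_mono)
        fix k assume "dist (g (s k) t) 0 < min e 1"
        then have "min (dist (us (m k) t) (u t)) 1 < min e 1"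
          by (simp add: g_def m_def dist_real_def)
        then show "dist (us (m k) t) (u t) < e"
          by (simp add: min_less_iff_conj min_def split: if_splits)
      qed
    qed
    define K where "K = insert (u t) (range (\<lambda>k. us (m k) t))"
    have "compactin euclidean K"
      unfolding K_def by (rule compactin_sequence_with_limit) (use c1 in auto)
    then have "compact K" by simp
    then have uK: "uniform_limit K fs f sequentially" by (rule unif)
    have A: "(\<lambda>k. dist (fs (m k) (us (m k) t)) (f (us (m k) t))) \<longlonglongrightarrow> 0"
    proof (rule tendstoI)
      fix e :: real assume "e > 0"
      then obtain N where N: "\<forall>n\<ge>N. \<forall>x\<in>K. dist (fs n x) (f x) < e"
        using uK unfolding uniform_limit_sequentially_iff by blast
      show "eventually (\<lambda>k. dist (dist (fs (m k) (us (m k) t)) (f (us (m k) t))) 0 < e) sequentially"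
        unfolding eventually_sequentially
      proof (intro exI allI impI)
        fix k assume "N \<le> k"
        then have "N \<le> m k" using seq_suble[OF m, of k] by linarith
        then show "dist (dist (fs (m k) (us (m k) t)) (f (us (m k) t))) 0 < e"
          using N K_def by auto
      qed
    qed
    have "isCont f (u t)" using cont_f by (simp add: continuous_on_eq_continuous_at)
    then have B: "(\<lambda>k. f (us (m k) t)) \<longlonglongrightarrow> f (u t)" using c1 isCont_tendsto_compose by blast
    have C: "(\<lambda>k. dist (fs (m k) (us (m k) t)) (f (us (m k) t)) + dist (f (us (m k) t)) (f (u t))) \<longlonglongrightarrow> 0"
    proof -
      have B': "(\<lambda>k. dist (f (us (m k) t)) (f (u t))) \<longlonglongrightarrow> 0"
        using tendsto_dist[OF B tendsto_const[of "f (u t)"]] by simp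
      show ?thesis using tendsto_add_zero[OF A B'] .
    qed
    show ?case
    proof (rule Lim_null_comparison[OF _ C])
      show "eventually (\<lambda>k. norm (min (dist (Mmap (fs (m k)) (us (m k)) t) (Mmap f u t)) 1)
          \<le> dist (fs (m k) (us (m k) t)) (f (us (m k) t)) + dist (f (us (m k) t)) (f (u t))) sequentially"
      proof (rule always_eventually, rule allI)
        fix k
        have "norm (min (dist (Mmap (fs (m k)) (us (m k)) t) (Mmap f u t)) 1)
            = min (dist (fs (m k) (us (m k) t)) (f (u t))) 1"
          by (simp add: Mmap_def)
        also have "\<dots> \<le> dist (fs (m k) (us (m k) t)) (f (u t))" by (rule min.cobounded1)
        also have "\<dots> \<le> dist (fs (m k) (us (m k) t)) (f (us (m k) t)) + dist (f (us (m k) t)) (f (u t))"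
          by (rule dist_triangle)
        finally show "norm (min (dist (Mmap (fs (m k)) (us (m k)) t) (Mmap f u t)) 1)
          \<le> dist (fs (m k) (us (m k) t)) (f (us (m k) t)) + dist (f (us (m k) t)) (f (u t))" .
      qed
    qed
  qed
  have "(\<lambda>k. integral\<^sup>L (lebesgue_on {0..1}) (\<lambda>t. min (dist (Mmap (fs (m k)) (us (m k)) t) (Mmap f u t)) 1))
      \<longlonglongrightarrow> integral\<^sup>L (lebesgue_on {0..1}) (\<lambda>t::real. 0::real)"
  proof (rule Bochner_Integration.integral_dominated_convergence[where w="\<lambda>_. 1" and M="lebesgue_on {0..1}" and f="\<lambda>_. 0" and s="\<lambda>k t. min (dist (Mmap (fs (m k)) (us (m k)) t) (Mmap f u t)) 1"])
    show "integrable (lebesgue_on {0..1}) (\<lambda>_::real. 1::real)"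
      using finite_measure.integrable_const[OF fm01] by blast
    show "(\<lambda>t. min (dist (Mmap (fs (m k)) (us (m k)) t) (Mmap f u t)) 1) \<in> borel_measurable (lebesgue_on {0..1})" for k
      by (rule dist_meas) (auto intro: Mmap_Mset cont_fs cont_f us u)
    show "AE t in lebesgue_on {0..1}. norm (min (dist (Mmap (fs (m k)) (us (m k)) t) (Mmap f u t)) 1) \<le> 1" for k
      by auto
  qed (use ae in auto)
  then show "\<exists>s. strict_mono s \<and> (\<lambda>k. dM (Mmap (fs (r (s k))) (us (r (s k)))) (Mmap f u)) \<longlonglongrightarrow> 0"
    using s(1) by (intro exI[of _ s]) (simp add: dM_def m_def)
qed

lemma istop_M: "istopology (\<lambda>S. S \<subseteq> Mset \<and> (\<forall>u\<in>S. \<exists>e>0. \<forall>w\<in>Mset. dM u w < e \<longrightarrow> w \<in> S))"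
  unfolding istopology_def
proof (rule conjI; intro allI impI)
  fix S T :: "(real \<Rightarrow> 'a::{metric_space,second_countable_topology}) set"
  assume S: "S \<subseteq> Mset \<and> (\<forall>u\<in>S. \<exists>e>0. \<forall>w\<in>Mset. dM u w < e \<longrightarrow> w \<in> S)"
     and T: "T \<subseteq> Mset \<and> (\<forall>u\<in>T. \<exists>e>0. \<forall>w\<in>Mset. dM u w < e \<longrightarrow> w \<in> T)"
  show "S \<inter> T \<subseteq> Mset \<and> (\<forall>u\<in>S \<inter> T. \<exists>e>0. \<forall>w\<in>Mset. dM u w < e \<longrightarrow> w \<in> S \<inter> T)"
  proof (intro conjI ballI)
    show "S \<inter> T \<subseteq> Mset" using S by blast
    fix u assume "u \<in> S \<inter> T"
    then obtain e1 e2 where e1: "e1 > 0" "\<forall>w\<in>Mset. dM u w < e1 \<longrightarrow> w \<in> S"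
      and e2: "e2 > 0" "\<forall>w\<in>Mset. dM u w < e2 \<longrightarrow> w \<in> T" using S T by blast
    show "\<exists>e>0. \<forall>w\<in>Mset. dM u w < e \<longrightarrow> w \<in> S \<inter> T"
      by (rule exI[of _ "min e1 e2"]) (use e1 e2 in auto)
  qed
next
  fix K :: "(real \<Rightarrow> 'a::{metric_space,second_countable_topology}) set set"
  assume K: "\<forall>S\<in>K. S \<subseteq> Mset \<and> (\<forall>u\<in>S. \<exists>e>0. \<forall>w\<in>Mset. dM u w < e \<longrightarrow> w \<in> S)"
  show "\<Union>K \<subseteq> Mset \<and> (\<forall>u\<in>\<Union>K. \<exists>e>0. \<forall>w\<in>Mset. dM u w < e \<longrightarrow> w \<in> \<Union>K)"
  proof (intro conjI ballI)
    show "\<Union>K \<subseteq> Mset" using K by blast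
    fix u assume "u \<in> \<Union>K"
    then obtain S where "S \<in> K" "u \<in> S" by blast
    then obtain e where "e > 0" "\<forall>w\<in>Mset. dM u w < e \<longrightarrow> w \<in> S" using K by blast
    then show "\<exists>e>0. \<forall>w\<in>Mset. dM u w < e \<longrightarrow> w \<in> \<Union>K" using \<open>S \<in> K\<close> by blast
  qed
qed

lemma openin_M: "openin M_topology S \<longleftrightarrow> S \<subseteq> Mset \<and> (\<forall>u\<in>S. \<exists>e>0. \<forall>w\<in>Mset. dM u w < e \<longrightarrow> w \<in> S)"
  unfolding M_topology_def topology_inverse'[OF istop_M] ..

lemma ball_open:
  assumes "w \<in> Mset"
  shows "openin M_topology {v\<in>Mset. dM w v < d}"
  unfolding openin_M
proof (intro conjI ballI)
  fix u assume u: "u \<in> {v\<in>Mset. dM w v < d}"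
  show "\<exists>e>0. \<forall>v\<in>Mset. dM u v < e \<longrightarrow> v \<in> {v\<in>Mset. dM w v < d}"
  proof (intro exI[of _ "d - dM w u"] conjI ballI impI)
    show "d - dM w u > 0" using u by simp
    fix v assume v: "v \<in> Mset" "dM u v < d - dM w u"
    have "dM w v \<le> dM w u + dM u v" using dM_triangle assms u v by blast
    then show "v \<in> {v\<in>Mset. dM w v < d}" using v by simp
  qed
qed auto

lemma topspace_M: "topspace M_topology = Mset"
proof -
  have "openin M_topology Mset" unfolding openin_M by (auto intro: exI[of _ 1])
  then have "Mset \<subseteq> topspace M_topology" by (rule openin_subset)
  moreover have "topspace M_topology \<subseteq> Mset"
    unfolding topspace_def openin_M by blast
  ultimately show ?thesis by blast
qed

lemma local_unif:
  fixes fs :: "nat \<Rightarrow> 'a::{metric_space,second_countable_topology} \<Rightarrow> 'b::{metric_space,second_countable_topology}"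
    and f :: "'a \<Rightarrow> 'b"
  assumes cont_fs: "\<And>n. continuous_on UNIV (fs n)"
    and cont_f: "continuous_on UNIV f"
    and unif: "\<And>K. compact K \<Longrightarrow> uniform_limit K fs f sequentially"
    and w: "w \<in> Mset" and e: "e > 0"
  shows "\<exists>d>0. \<exists>N. \<forall>n\<ge>N. \<forall>v\<in>Mset. dM w v < d \<longrightarrow> dM (Mmap (fs n) v) (Mmap f v) < e"
proof (rule ccontr)
  assume H: "\<not> ?thesis"
  have "\<forall>N. \<exists>p. fst p \<ge> N \<and> snd p \<in> Mset \<and> dM w (snd p) < inverse (real (Suc N))
           \<and> e \<le> dM (Mmap (fs (fst p)) (snd p)) (Mmap f (snd p))"
  proof
    fix N
    have "inverse (real (Suc N)) > 0" by simp
    then obtain n v where "n \<ge> N" "v \<in> Mset" "dM w v < inverse (real (Suc N))"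
      "\<not> dM (Mmap (fs n) v) (Mmap f v) < e" using H by blast
    then show "\<exists>p. fst p \<ge> N \<and> snd p \<in> Mset \<and> dM w (snd p) < inverse (real (Suc N))
           \<and> e \<le> dM (Mmap (fs (fst p)) (snd p)) (Mmap f (snd p))"
      by (intro exI[of _ "(n, v)"]) auto
  qed
  then obtain P where P: "\<And>N. fst (P N) \<ge> N \<and> snd (P N) \<in> Mset \<and> dM w (snd (P N)) < inverse (real (Suc N))
           \<and> e \<le> dM (Mmap (fs (fst (P N))) (snd (P N))) (Mmap f (snd (P N)))"
    by metis
  define nn where "nn N = fst (P N)" for N
  define vv where "vv N = snd (P N)" for N
  have vM: "\<And>N. vv N \<in> Mset" and nnN: "\<And>N. nn N \<ge> N"
    and vd: "\<And>N. dM w (vv N) < inverse (real (Suc N))"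
    and ve: "\<And>N. e \<le> dM (Mmap (fs (nn N)) (vv N)) (Mmap f (vv N))"
    using P unfolding nn_def vv_def by auto
  have lim: "(\<lambda>N. dM (vv N) w) \<longlonglongrightarrow> 0"
  proof (rule Lim_null_comparison[OF _ LIMSEQ_inverse_real_of_nat])
    show "eventually (\<lambda>N. norm (dM (vv N) w) \<le> inverse (real (Suc N))) sequentially"
    proof (intro always_eventually allI)
      fix N
      have "dM (vv N) w = dM w (vv N)" by (rule dM_sym)
      moreover have "0 \<le> dM (vv N) w" by (rule dM_nonneg)
      ultimately show "norm (dM (vv N) w) \<le> inverse (real (Suc N))" using vd[of N] by simp
    qed
  qed
  have unif': "uniform_limit K (\<lambda>k. fs (nn k)) f sequentially" if cK: "compact K" for K
    unfolding uniform_limit_sequentially_iff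
  proof (intro allI impI)
    fix d :: real assume "d > 0"
    then obtain N where N: "\<forall>n\<ge>N. \<forall>x\<in>K. dist (fs n x) (f x) < d"
      using unif[OF cK] unfolding uniform_limit_sequentially_iff by blast
    show "\<exists>N. \<forall>n\<ge>N. \<forall>x\<in>K. dist (fs (nn n) x) (f x) < d"
    proof (intro exI allI impI)
      fix n assume "N \<le> n"
      then have "N \<le> nn n" using nnN[of n] by linarith
      then show "\<forall>x\<in>K. dist (fs (nn n) x) (f x) < d" using N by blast
    qed
  qed
  have L1: "(\<lambda>N. dM (Mmap (fs (nn N)) (vv N)) (Mmap f w)) \<longlonglongrightarrow> 0"
    by (rule part1[of "\<lambda>k. fs (nn k)" f]) (use cont_fs cont_f unif' vM w lim in auto)
  have unif'': "uniform_limit K (\<lambda>k. f) f sequentially" for K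
    unfolding uniform_limit_sequentially_iff by auto
  have L2: "(\<lambda>N. dM (Mmap f (vv N)) (Mmap f w)) \<longlonglongrightarrow> 0"
    by (rule part1[of "\<lambda>k. f" f]) (use cont_f unif'' vM w lim in auto)
  have L3: "(\<lambda>N. dM (Mmap (fs (nn N)) (vv N)) (Mmap f (vv N))) \<longlonglongrightarrow> 0"
  proof (rule Lim_null_comparison[OF _ tendsto_add_zero[OF L1 L2]])
    show "eventually (\<lambda>N. norm (dM (Mmap (fs (nn N)) (vv N)) (Mmap f (vv N)))
        \<le> dM (Mmap (fs (nn N)) (vv N)) (Mmap f w) + dM (Mmap f (vv N)) (Mmap f w)) sequentially"
    proof (intro always_eventually allI)
      fix N
      have a: "Mmap (fs (nn N)) (vv N) \<in> Mset" "Mmap f (vv N) \<in> Mset" "Mmap f w \<in> Mset"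
        using Mmap_Mset cont_fs cont_f vM w by auto
      have "dM (Mmap (fs (nn N)) (vv N)) (Mmap f (vv N))
          \<le> dM (Mmap (fs (nn N)) (vv N)) (Mmap f w) + dM (Mmap f w) (Mmap f (vv N))"
        using dM_triangle[OF a(1) a(3) a(2)] .
      then show "norm (dM (Mmap (fs (nn N)) (vv N)) (Mmap f (vv N)))
        \<le> dM (Mmap (fs (nn N)) (vv N)) (Mmap f w) + dM (Mmap f (vv N)) (Mmap f w)"
        using dM_nonneg[of "Mmap (fs (nn N)) (vv N)" "Mmap f (vv N)"] dM_sym[of "Mmap f w" "Mmap f (vv N)"]
        by simp
    qed
  qed
  have "eventually (\<lambda>N. dist (dM (Mmap (fs (nn N)) (vv N)) (Mmap f (vv N))) 0 < e) sequentially"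
    using tendstoD[OF L3 e] .
  then obtain N where "dist (dM (Mmap (fs (nn N)) (vv N)) (Mmap f (vv N))) 0 < e"
    unfolding eventually_sequentially by blast
  with ve[of N] dM_nonneg[of "Mmap (fs (nn N)) (vv N)" "Mmap f (vv N)"] show False by simp
qed

theorem mainTheorem6:
  fixes fs :: "nat \<Rightarrow> 'a::{metric_space,second_countable_topology} \<Rightarrow> 'b::{metric_space,second_countable_topology}"
    and f :: "'a \<Rightarrow> 'b"
  assumes cont_fs: "\<And>n. continuous_on UNIV (fs n)"
    and cont_f: "continuous_on UNIV f"
    and unif: "\<And>K. compact K \<Longrightarrow> uniform_limit K fs f sequentially"
  shows "(\<forall>us u. (\<forall>n. us n \<in> Mset) \<longrightarrow> u \<in> Mset \<longrightarrow> (\<lambda>n. dM (us n) u) \<longlonglongrightarrow> 0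
            \<longrightarrow> (\<lambda>n. dM (Mmap (fs n) (us n)) (Mmap f u)) \<longlonglongrightarrow> 0)
       \<and> (\<forall>K. compactin M_topology K \<longrightarrow>
            (\<forall>e>0. \<forall>\<^sub>F n in sequentially. \<forall>u\<in>K. dM (Mmap (fs n) u) (Mmap f u) < e))"
proof (intro conjI allI impI)
  fix us :: "nat \<Rightarrow> real \<Rightarrow> 'a" and u :: "real \<Rightarrow> 'a"
  assume "\<forall>n. us n \<in> Mset" "u \<in> Mset" "(\<lambda>n. dM (us n) u) \<longlonglongrightarrow> 0"
  then show "(\<lambda>n. dM (Mmap (fs n) (us n)) (Mmap f u)) \<longlonglongrightarrow> 0"
    using part1[OF cont_fs cont_f unif] by blast
next
  fix K :: "(real \<Rightarrow> 'a) set" and e :: real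
  assume cK: "compactin M_topology K" and e: "e > 0"
  have KM: "K \<subseteq> Mset" using compactin_subset_topspace[OF cK] by (simp add: topspace_M)
  have "\<forall>w\<in>K. \<exists>d. d > 0 \<and> (\<exists>N. \<forall>n\<ge>N. \<forall>v\<in>Mset. dM w v < d \<longrightarrow> dM (Mmap (fs n) v) (Mmap f v) < e)"
    using local_unif[OF cont_fs cont_f unif _ e] KM by blast
  then obtain d where d: "\<forall>w\<in>K. d w > 0 \<and> (\<exists>N. \<forall>n\<ge>N. \<forall>v\<in>Mset. dM w v < d w \<longrightarrow> dM (Mmap (fs n) v) (Mmap f v) < e)"
    by (rule bchoice[THEN exE]) blast
  then have "\<forall>w\<in>K. \<exists>N. \<forall>n\<ge>N. \<forall>v\<in>Mset. dM w v < d w \<longrightarrow> dM (Mmap (fs n) v) (Mmap f v) < e"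
    by blast
  then obtain NN where NN: "\<forall>w\<in>K. \<forall>n\<ge>NN w. \<forall>v\<in>Mset. dM w v < d w \<longrightarrow> dM (Mmap (fs n) v) (Mmap f v) < e"
    by (rule bchoice[THEN exE]) blast
  define U where "U = (\<lambda>w. {v\<in>Mset. dM w v < d w}) ` K"
  have UO: "\<forall>B\<in>U. openin M_topology B" unfolding U_def using ball_open KM by blast
  have KU: "K \<subseteq> \<Union>U"
  proof
    fix u assume "u \<in> K"
    then have "u \<in> {v\<in>Mset. dM u v < d u}" using KM d by (auto simp: dM_refl)
    then show "u \<in> \<Union>U" unfolding U_def using \<open>u \<in> K\<close> by blast
  qed
  have cov: "(\<forall>B\<in>U. openin M_topology B) \<and> K \<subseteq> \<Union>U \<longrightarrow> (\<exists>F. finite F \<and> F \<subseteq> U \<and> K \<subseteq> \<Union>F)"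
    using cK[unfolded compactin_def, THEN conjunct2, THEN spec[of _ U]] .
  obtain F where F: "finite F" "F \<subseteq> U" "K \<subseteq> \<Union>F"
    using mp[OF cov conjI[OF UO KU]] by blast
  obtain C where C: "C \<subseteq> K" "finite C" "F = (\<lambda>w. {v\<in>Mset. dM w v < d w}) ` C"
    using finite_subset_image[OF F(1) F(2)[unfolded U_def]] by blast
  show "\<forall>\<^sub>F n in sequentially. \<forall>u\<in>K. dM (Mmap (fs n) u) (Mmap f u) < e"
    unfolding eventually_sequentially
  proof (intro exI allI impI ballI)
    fix n u assume n: "Max (insert 0 (NN ` C)) \<le> n" and u: "u \<in> K"
    then obtain w where w: "w \<in> C" "u \<in> Mset" "dM w u < d w" using F C by auto
    have "NN w \<le> Max (insert 0 (NN ` C))" using C(2) w(1) by (intro Max_ge) auto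
    then have "NN w \<le> n" using n by linarith
    then show "dM (Mmap (fs n) u) (Mmap f u) < e" using NN w C(1) by blast
  qed
qed

end
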